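(* Let $\mathbb{K}$ be an infinite field of characteristic zero and $\Delta$ a pure simplicial complex on vertex set $[n]$ (each $\{i\}$ a face) with at least as many facets as vertices. If the facet ideal $\mathcal{F}(\Delta)\subset\mathbb{K}[x_1,\dots,x_n]$ is normally torsion-free, then $A(\Delta)$ fails the strong Lefschetz property.
   Context: Let $S=\mathbb{K}[x_1,\dots,x_n]$. $\mathcal{F}(\Delta)=(x_F:F\text{ a facet of }\Delta)$ and $\mathcal{N}(\Delta)=(x_\tau:\tau\subseteq[n],\ \tau\notin\Delta)$ with $x_\tau=\prod_{j\in\tau}x_j$; $A(\Delta)=S/(\mathcal{N}(\Delta)+(x_1^2,\dots,x_n^2))$. A graded artinian algebra $A$ has the strong Lefschetz property if for a general linear form $L$ all maps $\times L^j:A_i\to A_{i+j}$ have full rank. For a squarefree monomial ideal $I$, the $m$-th symbolic power is $I^{(m)}=\bigcap_{P\in\mathrm{Ass}(I)}P^m$; $I$ is normally torsion-free if $I^{(m)}=I^m$ for all $m\ge1$. *)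

theory Defs
  imports Main "HOL-Library.Poly_Mapping"
begin

text \<open>A polynomial over 'k in variables x_0, x_1, ... is a finitely supported map from
  monomials (exponent vectors, nat =>0 nat) to coefficients.\<close>

type_synonym 'k mpoly = "(nat \<Rightarrow>\<^sub>0 nat) \<Rightarrow>\<^sub>0 'k"

definition var :: "nat \<Rightarrow> 'k::comm_ring_1 mpoly" where
  "var i = Poly_Mapping.single (Poly_Mapping.single i 1) 1"

definition const :: "'k::comm_ring_1 \<Rightarrow> 'k mpoly" where
  "const c = Poly_Mapping.single 0 c"

definition xset :: "nat set \<Rightarrow> 'k::comm_ring_1 mpoly" where
  "xset \<tau> = (\<Prod>j\<in>\<tau>. var j)"

definition polyring :: "nat \<Rightarrow> 'k::comm_ring_1 mpoly set" where
  "polyring n = {p. \<forall>m\<in>Poly_Mapping.keys p. Poly_Mapping.keys m \<subseteq> {1..n}}"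

definition mdeg :: "(nat \<Rightarrow>\<^sub>0 nat) \<Rightarrow> nat" where
  "mdeg m = (\<Sum>j\<in>Poly_Mapping.keys m. Poly_Mapping.lookup m j)"

definition hom :: "nat \<Rightarrow> nat \<Rightarrow> 'k::comm_ring_1 mpoly set" where
  "hom n i = {p \<in> polyring n. \<forall>m\<in>Poly_Mapping.keys p. mdeg m = i}"

definition is_ideal :: "nat \<Rightarrow> 'k::comm_ring_1 mpoly set \<Rightarrow> bool" where
  "is_ideal n I \<longleftrightarrow> I \<subseteq> polyring n \<and> 0 \<in> I \<and> (\<forall>a\<in>I. \<forall>b\<in>I. a + b \<in> I)
     \<and> (\<forall>a\<in>I. \<forall>r\<in>polyring n. r * a \<in> I)"

definition ideal_gen :: "nat \<Rightarrow> 'k::comm_ring_1 mpoly set \<Rightarrow> 'k mpoly set" where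
  "ideal_gen n G = \<Inter>{I. is_ideal n I \<and> G \<subseteq> I}"

definition ideal_pow :: "nat \<Rightarrow> 'k::comm_ring_1 mpoly set \<Rightarrow> nat \<Rightarrow> 'k mpoly set" where
  "ideal_pow n I m = ideal_gen n {prod_list xs | xs. length xs = m \<and> set xs \<subseteq> I}"

definition is_prime_ideal :: "nat \<Rightarrow> 'k::comm_ring_1 mpoly set \<Rightarrow> bool" where
  "is_prime_ideal n P \<longleftrightarrow> is_ideal n P \<and> P \<noteq> polyring n \<and>
     (\<forall>a\<in>polyring n. \<forall>b\<in>polyring n. a * b \<in> P \<longrightarrow> a \<in> P \<or> b \<in> P)"

definition colon :: "nat \<Rightarrow> 'k::comm_ring_1 mpoly set \<Rightarrow> 'k mpoly \<Rightarrow> 'k mpoly set" where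
  "colon n I f = {r \<in> polyring n. r * f \<in> I}"

definition Ass :: "nat \<Rightarrow> 'k::comm_ring_1 mpoly set \<Rightarrow> 'k mpoly set set" where
  "Ass n I = {P. is_prime_ideal n P \<and> (\<exists>f\<in>polyring n. P = colon n I f)}"

text \<open>Symbolic power I^(m) = intersection of P^m over P in Ass(I) (as in the paper,
  for squarefree monomial ideals); intersected with S so that it is S when Ass(I) is empty.\<close>
definition symb_pow :: "nat \<Rightarrow> 'k::comm_ring_1 mpoly set \<Rightarrow> nat \<Rightarrow> 'k mpoly set" where
  "symb_pow n I m = polyring n \<inter> (\<Inter>P\<in>Ass n I. ideal_pow n P m)"

definition normally_torsion_free :: "nat \<Rightarrow> 'k::comm_ring_1 mpoly set \<Rightarrow> bool" where
  "normally_torsion_free n I \<longleftrightarrow> (\<forall>m\<ge>1. symb_pow n I m = ideal_pow n I m)"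

definition simplicial_complex :: "nat \<Rightarrow> nat set set \<Rightarrow> bool" where
  "simplicial_complex n \<Delta> \<longleftrightarrow> (\<forall>F\<in>\<Delta>. F \<subseteq> {1..n}) \<and> (\<forall>F\<in>\<Delta>. \<forall>G. G \<subseteq> F \<longrightarrow> G \<in> \<Delta>)
     \<and> (\<forall>i\<in>{1..n}. {i} \<in> \<Delta>)"

definition facets :: "nat set set \<Rightarrow> nat set set" where
  "facets \<Delta> = {F \<in> \<Delta>. \<forall>G\<in>\<Delta>. F \<subseteq> G \<longrightarrow> G = F}"

definition pure :: "nat set set \<Rightarrow> bool" where
  "pure \<Delta> \<longleftrightarrow> (\<forall>F\<in>facets \<Delta>. \<forall>G\<in>facets \<Delta>. card F = card G)"

definition facet_ideal :: "nat \<Rightarrow> nat set set \<Rightarrow> 'k::comm_ring_1 mpoly set" where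
  "facet_ideal n \<Delta> = ideal_gen n (xset ` facets \<Delta>)"

definition nonface_ideal :: "nat \<Rightarrow> nat set set \<Rightarrow> 'k::comm_ring_1 mpoly set" where
  "nonface_ideal n \<Delta> = ideal_gen n (xset ` {\<tau>. \<tau> \<subseteq> {1..n} \<and> \<tau> \<notin> \<Delta>})"

definition A_ideal :: "nat \<Rightarrow> nat set set \<Rightarrow> 'k::comm_ring_1 mpoly set" where
  "A_ideal n \<Delta> = ideal_gen n (xset ` {\<tau>. \<tau> \<subseteq> {1..n} \<and> \<tau> \<notin> \<Delta>} \<union> {var i ^ 2 | i. i \<in> {1..n}})"

text \<open>Multiplication by g: A_i -> A_(i+j) (g of degree j) has full (maximal) rank iff it is
  injective or surjective, written here on representatives in S.\<close>
definition full_rank_mult :: "nat \<Rightarrow> 'k::comm_ring_1 mpoly set \<Rightarrow> 'k mpoly \<Rightarrow> nat \<Rightarrow> nat \<Rightarrow> bool" where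
  "full_rank_mult n J g i k \<longleftrightarrow>
     (\<forall>f\<in>hom n i. g * f \<in> J \<longrightarrow> f \<in> J) \<or>
     (\<forall>h\<in>hom n (i + k). \<exists>f\<in>hom n i. h - g * f \<in> J)"

definition linear_forms :: "nat \<Rightarrow> 'k::comm_ring_1 mpoly set" where
  "linear_forms n = {(\<Sum>i\<in>{1..n}. const (c i) * var i) | c. True}"

text \<open>Over an infinite field, "a general linear form L has all maps x L^j of full rank"
  is equivalent to the existence of one such L (full rank is a Zariski-open condition,
  and only finitely many pairs (i,j) are nontrivial since A is artinian).\<close>
definition strong_lefschetz :: "nat \<Rightarrow> 'k::comm_ring_1 mpoly set \<Rightarrow> bool" where
  "strong_lefschetz n J \<longleftrightarrow>
     (\<exists>L\<in>linear_forms n. \<forall>i j. full_rank_mult n J (L ^ j) i j)"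

end

theory Submission
  imports Defs Jordan_Normal_Form.Determinant
begin


lemma la_nat:
  fixes M :: "nat \<Rightarrow> nat \<Rightarrow> 'k::field"
  assumes "nc \<le> nr" "j0 < nc" "v j0 \<noteq> 0" "\<forall>r<nr. (\<Sum>j<nc. M r j * v j) = 0"
  shows "\<exists>u. (\<exists>r<nr. u r \<noteq> 0) \<and> (\<forall>j<nc. (\<Sum>r<nr. u r * M r j) = 0)"
proof -
  define B where "B = mat nr nr (\<lambda>(r,j). if j < nc then M r j else 0)"
  define w where "w = vec nr (\<lambda>j. if j < nc then v j else 0)"
  have B: "B \<in> carrier_mat nr nr" by (simp add: B_def)
  have w: "w \<in> carrier_vec nr" by (simp add: w_def)
  have wnz: "w \<noteq> 0\<^sub>v nr"
  proof
    assume "w = 0\<^sub>v nr"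
    hence "w $ j0 = 0" using assms by simp
    thus False using assms by (simp add: w_def)
  qed
  have Bw: "B *\<^sub>v w = 0\<^sub>v nr"
  proof (rule eq_vecI)
    fix r assume r: "r < dim_vec (0\<^sub>v nr :: 'k vec)"
    hence r': "r < nr" by simp
    have "(B *\<^sub>v w) $ r = (\<Sum>j<nr. (if j < nc then M r j else 0) * (if j < nc then v j else 0))"
      using r' by (simp add: B_def w_def scalar_prod_def atLeast0LessThan)
    also have "\<dots> = (\<Sum>j<nc. M r j * v j)"
    proof -
      have "(\<Sum>j<nr. (if j < nc then M r j else 0) * (if j < nc then v j else 0))
          = (\<Sum>j<nc. (if j < nc then M r j else 0) * (if j < nc then v j else 0))"
        by (rule sum.mono_neutral_right) (use assms in auto)
      thus ?thesis by simp
    qed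
    also have "\<dots> = 0" using assms r' by auto
    finally show "(B *\<^sub>v w) $ r = 0\<^sub>v nr $ r" using r' by simp
  qed (simp add: B_def)
  have "det B = 0" using det_0_iff_vec_prod_zero_field[OF B] w wnz Bw by blast
  hence "det (transpose_mat B) = 0" using det_transpose[OF B] by simp
  moreover have BT: "transpose_mat B \<in> carrier_mat nr nr" using B by simp
  ultimately obtain u where u: "u \<in> carrier_vec nr" "u \<noteq> 0\<^sub>v nr" "transpose_mat B *\<^sub>v u = 0\<^sub>v nr"
    using det_0_iff_vec_prod_zero_field[OF BT] by blast
  have ex: "\<exists>r<nr. u $ r \<noteq> 0"
  proof (rule ccontr)
    assume "\<not> ?thesis"
    hence "u = 0\<^sub>v nr" using u(1) by (intro eq_vecI) auto
    thus False using u(2) by simp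
  qed
  have "\<forall>j<nc. (\<Sum>r<nr. u $ r * M r j) = 0"
  proof (intro allI impI)
    fix j assume j: "j < nc"
    hence jr: "j < nr" using assms by simp
    have "(transpose_mat B *\<^sub>v u) $ j = 0" using u(3) jr by simp
    moreover have "(transpose_mat B *\<^sub>v u) $ j = (\<Sum>r<nr. M r j * u $ r)"
      using jr j u(1) by (simp add: B_def scalar_prod_def atLeast0LessThan)
    ultimately show "(\<Sum>r<nr. u $ r * M r j) = 0" by (simp add: mult.commute)
  qed
  with ex show ?thesis by blast
qed




definition sq :: "nat set \<Rightarrow> (nat \<Rightarrow>\<^sub>0 nat)" where
  "sq \<sigma> = (\<Sum>i\<in>\<sigma>. Poly_Mapping.single i 1)"

lemma lookup_sq: "finite \<sigma> \<Longrightarrow> Poly_Mapping.lookup (sq \<sigma>) i = (if i \<in> \<sigma> then 1 else 0)"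
  unfolding sq_def lookup_sum by (simp add: lookup_single when_def)

lemma keys_sq: "finite \<sigma> \<Longrightarrow> Poly_Mapping.keys (sq \<sigma>) = \<sigma>"
  by (auto simp: in_keys_iff lookup_sq split: if_splits)

lemma sq_inj: "finite \<sigma> \<Longrightarrow> finite \<tau> \<Longrightarrow> sq \<sigma> = sq \<tau> \<longleftrightarrow> \<sigma> = \<tau>"
  by (metis keys_sq)

lemma xset_eq: "xset \<sigma> = (Poly_Mapping.single (sq \<sigma>) 1 :: 'k::comm_ring_1 mpoly)"
proof (cases "finite \<sigma>")
  case True
  thus ?thesis
    by (induction rule: finite_induct)
       (simp_all add: xset_def sq_def var_def mult_single)
next
  case False
  thus ?thesis by (simp add: xset_def sq_def)
qed

lemma mdeg_alt: "finite S \<Longrightarrow> Poly_Mapping.keys m \<subseteq> S \<Longrightarrow> mdeg m = sum (Poly_Mapping.lookup m) S"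
  unfolding mdeg_def by (rule sum.mono_neutral_left) (auto simp: in_keys_iff)

lemma mdeg_add: "mdeg (a + b) = mdeg a + mdeg b"
proof -
  let ?S = "Poly_Mapping.keys a \<union> Poly_Mapping.keys b"
  have "mdeg (a + b) = sum (Poly_Mapping.lookup (a+b)) ?S"
    by (rule mdeg_alt) (auto simp: in_keys_iff lookup_add)
  also have "\<dots> = sum (Poly_Mapping.lookup a) ?S + sum (Poly_Mapping.lookup b) ?S"
    by (simp add: lookup_add sum.distrib)
  also have "\<dots> = mdeg a + mdeg b"
    using mdeg_alt[of ?S a] mdeg_alt[of ?S b] by simp
  finally show ?thesis .
qed

lemma mdeg_zero[simp]: "mdeg 0 = 0" by (simp add: mdeg_def)

lemma mdeg_sum: "mdeg (sum f A) = (\<Sum>x\<in>A. mdeg (f x))"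
  by (induction A rule: infinite_finite_induct) (simp_all add: mdeg_add)

lemma mdeg_single: "mdeg (Poly_Mapping.single i k) = k"
  by (cases "k = 0") (simp_all add: mdeg_def)

lemma mdeg_sq: "finite \<sigma> \<Longrightarrow> mdeg (sq \<sigma>) = card \<sigma>"
  by (simp add: sq_def mdeg_sum mdeg_single)

lemma mdeg_one_single:
  assumes "mdeg m = 1" shows "\<exists>j. m = Poly_Mapping.single j 1"
proof -
  have "Poly_Mapping.keys m \<noteq> {}" using assms by (auto simp: mdeg_def)
  then obtain j where j: "j \<in> Poly_Mapping.keys m" by blast
  have "mdeg m = Poly_Mapping.lookup m j + (\<Sum>i\<in>Poly_Mapping.keys m - {j}. Poly_Mapping.lookup m i)"
    unfolding mdeg_def using j by (simp add: sum.remove)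
  moreover have "Poly_Mapping.lookup m j \<ge> 1" using j by (simp add: in_keys_iff)
  ultimately have a: "Poly_Mapping.lookup m j = 1" and b: "(\<Sum>i\<in>Poly_Mapping.keys m - {j}. Poly_Mapping.lookup m i) = 0"
    using assms by linarith+
  from b have "\<forall>i\<in>Poly_Mapping.keys m - {j}. Poly_Mapping.lookup m i = 0" by simp
  hence "\<forall>i. i \<noteq> j \<longrightarrow> Poly_Mapping.lookup m i = 0" by (auto simp: in_keys_iff)
  hence "m = Poly_Mapping.single j 1"
    using a by (intro poly_mapping_eqI) (auto simp: lookup_single when_def)
  thus ?thesis by blast
qed

lemma lookup_single_mult:
  "Poly_Mapping.lookup (Poly_Mapping.single a c * p) k
     = c * Sum_any (\<lambda>q. Poly_Mapping.lookup p q when k = a + q)"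
  by (simp add: lookup_mult lookup_single when_mult)

lemma lookup_const_mult: "Poly_Mapping.lookup (const c * p) k = c * Poly_Mapping.lookup p k"
proof -
  have "(\<lambda>q. Poly_Mapping.lookup p q when k = 0 + q) = (\<lambda>q. Poly_Mapping.lookup p q when q = k)"
    by (auto simp: when_def)
  thus ?thesis by (simp add: const_def lookup_single_mult)
qed

lemma sq_insert: "finite \<sigma> \<Longrightarrow> i \<notin> \<sigma> \<Longrightarrow> sq (insert i \<sigma>) = Poly_Mapping.single i 1 + sq \<sigma>"
  by (simp add: sq_def)

lemma lookup_var_mult_sq:
  assumes "finite \<sigma>"
  shows "Poly_Mapping.lookup (var i * p) (sq \<sigma>) = (if i \<in> \<sigma> then Poly_Mapping.lookup p (sq (\<sigma> - {i})) else 0)"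
proof (cases "i \<in> \<sigma>")
  case True
  have eq: "sq \<sigma> = Poly_Mapping.single i 1 + sq (\<sigma> - {i})"
    using True assms sq_insert[of "\<sigma> - {i}" i] by (simp add: insert_absorb)
  have h: "(\<lambda>q. Poly_Mapping.lookup p q when sq \<sigma> = Poly_Mapping.single i 1 + q)
      = (\<lambda>q. Poly_Mapping.lookup p q when q = sq (\<sigma> - {i}))"
    unfolding eq by (auto simp: when_def)
  show ?thesis using True unfolding var_def lookup_single_mult h by simp
next
  case False
  have h: "(\<lambda>q. Poly_Mapping.lookup p q when sq \<sigma> = Poly_Mapping.single i 1 + q) = (\<lambda>q. 0)"
  proof
    fix q
    have "sq \<sigma> \<noteq> Poly_Mapping.single i 1 + q"
    proof
      assume "sq \<sigma> = Poly_Mapping.single i 1 + q"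
      hence "Poly_Mapping.lookup (sq \<sigma>) i = Poly_Mapping.lookup (Poly_Mapping.single i 1 + q) i" by simp
      thus False using False assms by (simp add: lookup_sq lookup_add)
    qed
    thus "(Poly_Mapping.lookup p q when sq \<sigma> = Poly_Mapping.single i 1 + q) = 0" by simp
  qed
  show ?thesis using False unfolding var_def lookup_single_mult h by simp
qed




lemma keys_add_nat: "Poly_Mapping.keys (a + b :: nat \<Rightarrow>\<^sub>0 nat) = Poly_Mapping.keys a \<union> Poly_Mapping.keys b"
  by (auto simp: in_keys_iff lookup_add)

lemma polyring_zero[simp]: "0 \<in> polyring n" by (simp add: polyring_def)
lemma polyring_single: "Poly_Mapping.keys a \<subseteq> {1..n} \<Longrightarrow> Poly_Mapping.single a c \<in> polyring n"
  by (simp add: polyring_def)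
lemma polyring_one[simp]: "1 \<in> polyring n"
  by (simp add: polyring_def)
lemma polyring_const[simp]: "const c \<in> polyring n"
  by (simp add: const_def polyring_single)
lemma polyring_var: "i \<in> {1..n} \<Longrightarrow> var i \<in> polyring n"
  by (simp add: var_def polyring_single)
lemma polyring_iff: "p \<in> polyring n \<longleftrightarrow> (\<forall>m\<in>Poly_Mapping.keys p. Poly_Mapping.keys m \<subseteq> {1..n})"
  by (simp add: polyring_def)
lemma polyring_add: "p \<in> polyring n \<Longrightarrow> q \<in> polyring n \<Longrightarrow> p + q \<in> polyring n"
  unfolding polyring_iff by (meson Un_iff keys_add subsetD)
lemma polyring_uminus: "p \<in> polyring n \<Longrightarrow> - p \<in> polyring n"
  unfolding polyring_iff by (simp add: keys_minus)
lemma polyring_mult: "p \<in> polyring n \<Longrightarrow> q \<in> polyring n \<Longrightarrow> p * q \<in> polyring n"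
proof -
  assume p: "p \<in> polyring n" and q: "q \<in> polyring n"
  show ?thesis unfolding polyring_iff
  proof (rule ballI)
    fix m assume "m \<in> Poly_Mapping.keys (p * q)"
    then obtain a b where ab: "m = a + b" "a \<in> Poly_Mapping.keys p" "b \<in> Poly_Mapping.keys q"
      using keys_mult by blast
    moreover have "Poly_Mapping.keys a \<subseteq> {1..n}" "Poly_Mapping.keys b \<subseteq> {1..n}"
      using p q unfolding polyring_iff by (meson ab)+
    ultimately show "Poly_Mapping.keys m \<subseteq> {1..n}" by (simp add: keys_add_nat)
  qed
qed
lemma polyring_diff: "p \<in> polyring n \<Longrightarrow> q \<in> polyring n \<Longrightarrow> p - q \<in> polyring n"
  using polyring_add polyring_uminus by (metis diff_conv_add_uminus)
lemma polyring_sum: "(\<And>x. x \<in> A \<Longrightarrow> f x \<in> polyring n) \<Longrightarrow> sum f A \<in> polyring n"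
  by (induction A rule: infinite_finite_induct) (auto intro: polyring_add)
lemma polyring_prod: "(\<And>x. x \<in> A \<Longrightarrow> f x \<in> polyring n) \<Longrightarrow> prod f A \<in> polyring n"
  by (induction A rule: infinite_finite_induct) (auto intro: polyring_mult)
lemma polyring_power: "p \<in> polyring n \<Longrightarrow> p ^ k \<in> polyring n"
  by (induction k) (auto intro: polyring_mult)
lemma polyring_xset: "\<sigma> \<subseteq> {1..n} \<Longrightarrow> xset \<sigma> \<in> polyring n"
  unfolding xset_def by (rule polyring_prod) (simp add: polyring_var subset_iff)

lemma polyring_ideal: "is_ideal n (polyring n)"
  unfolding is_ideal_def by (auto intro: polyring_add polyring_mult)

lemma ideal_gen_least: "is_ideal n I \<Longrightarrow> G \<subseteq> I \<Longrightarrow> ideal_gen n G \<subseteq> I"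
  unfolding ideal_gen_def by (rule Inter_lower) simp

lemma ideal_gen_sub: "G \<subseteq> ideal_gen n G"
  unfolding ideal_gen_def by (rule Inter_greatest) simp

lemma ideal_gen_ideal:
  assumes "G \<subseteq> polyring n" shows "is_ideal n (ideal_gen n G)"
proof -
  let ?S = "{I. is_ideal n I \<and> G \<subseteq> I}"
  have ne: "polyring n \<in> ?S" using assms polyring_ideal by simp
  have 1: "\<Inter> ?S \<subseteq> polyring n" using ne by (rule Inter_lower)
  have 2: "0 \<in> \<Inter> ?S" by (rule InterI) (simp add: is_ideal_def)
  have 3: "a + b \<in> \<Inter> ?S" if "a \<in> \<Inter> ?S" "b \<in> \<Inter> ?S" for a b
  proof (rule InterI)
    fix I assume I: "I \<in> ?S"
    hence "a \<in> I" "b \<in> I" using that by (meson InterD)+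
    moreover have "is_ideal n I" using I by simp
    ultimately show "a + b \<in> I" by (simp add: is_ideal_def)
  qed
  have 4: "r * a \<in> \<Inter> ?S" if "a \<in> \<Inter> ?S" "r \<in> polyring n" for a r
  proof (rule InterI)
    fix I assume I: "I \<in> ?S"
    hence "a \<in> I" using that by (meson InterD)
    moreover have "is_ideal n I" using I by simp
    ultimately show "r * a \<in> I" using that(2) by (simp add: is_ideal_def)
  qed
  have "\<Inter> ?S \<subseteq> polyring n \<and> 0 \<in> \<Inter> ?S \<and> (\<forall>a\<in>\<Inter> ?S. \<forall>b\<in>\<Inter> ?S. a + b \<in> \<Inter> ?S)
     \<and> (\<forall>a\<in>\<Inter> ?S. \<forall>r\<in>polyring n. r * a \<in> \<Inter> ?S)"
    using 1 2 3 4 by simp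
  thus ?thesis unfolding is_ideal_def ideal_gen_def .
qed

lemma ideal_sum: "is_ideal n I \<Longrightarrow> (\<And>x. x \<in> A \<Longrightarrow> f x \<in> I) \<Longrightarrow> sum f A \<in> I"
  by (induction A rule: infinite_finite_induct) (auto simp: is_ideal_def)

lemma ideal_mult: "is_ideal n I \<Longrightarrow> a \<in> I \<Longrightarrow> r \<in> polyring n \<Longrightarrow> r * a \<in> I"
  by (simp add: is_ideal_def)

lemma ideal_mult': "is_ideal n I \<Longrightarrow> a \<in> I \<Longrightarrow> r \<in> polyring n \<Longrightarrow> a * r \<in> I"
  by (simp add: is_ideal_def mult.commute)

lemma ideal_sub: "is_ideal n I \<Longrightarrow> I \<subseteq> polyring n"
  by (simp add: is_ideal_def)

lemma ideal_uminus: "is_ideal n I \<Longrightarrow> a \<in> I \<Longrightarrow> - a \<in> I"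
proof -
  assume I: "is_ideal n I" and a: "a \<in> I"
  have "(- 1) * a \<in> I" using I a by (intro ideal_mult) (auto intro: polyring_uminus)
  thus ?thesis by simp
qed

lemma ideal_add: "is_ideal n I \<Longrightarrow> a \<in> I \<Longrightarrow> b \<in> I \<Longrightarrow> a + b \<in> I"
  by (simp add: is_ideal_def)

lemma ideal_diff: "is_ideal n I \<Longrightarrow> a \<in> I \<Longrightarrow> b \<in> I \<Longrightarrow> a - b \<in> I"
  by (metis diff_conv_add_uminus ideal_add ideal_uminus)




lemma sq_split:
  assumes "finite \<sigma>" "sq \<sigma> = l + q"
  shows "Poly_Mapping.keys q \<subseteq> \<sigma> \<and> q = sq (Poly_Mapping.keys q)"
proof -
  have L: "Poly_Mapping.lookup (sq \<sigma>) i = Poly_Mapping.lookup l i + Poly_Mapping.lookup q i" for i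
    using assms(2) by (simp add: lookup_add)
  have 1: "Poly_Mapping.keys q \<subseteq> \<sigma>"
  proof
    fix i assume "i \<in> Poly_Mapping.keys q"
    hence "Poly_Mapping.lookup q i \<noteq> 0" by (simp add: in_keys_iff)
    hence "Poly_Mapping.lookup (sq \<sigma>) i \<noteq> 0" using L[of i] by simp
    thus "i \<in> \<sigma>" using assms(1) by (simp add: lookup_sq split: if_splits)
  qed
  have 2: "q = sq (Poly_Mapping.keys q)"
  proof (rule poly_mapping_eqI)
    fix i
    have "Poly_Mapping.lookup q i \<le> 1"
      using L[of i] assms(1) by (simp add: lookup_sq split: if_splits)
    thus "Poly_Mapping.lookup q i = Poly_Mapping.lookup (sq (Poly_Mapping.keys q)) i"
      by (simp add: lookup_sq in_keys_iff)
  qed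
  show ?thesis using 1 2 by simp
qed

lemma poly_sum_monomials:
  "p = (\<Sum>a\<in>Poly_Mapping.keys p. Poly_Mapping.single a (Poly_Mapping.lookup p a))"
proof (rule poly_mapping_eqI)
  fix k
  have "Poly_Mapping.lookup (\<Sum>a\<in>Poly_Mapping.keys p. Poly_Mapping.single a (Poly_Mapping.lookup p a)) k
      = (\<Sum>a\<in>Poly_Mapping.keys p. (if a = k then Poly_Mapping.lookup p a else 0))"
    by (simp add: lookup_sum lookup_single when_def)
  also have "\<dots> = Poly_Mapping.lookup p k"
    by (simp add: sum.delta in_keys_iff)
  finally show "Poly_Mapping.lookup p k = Poly_Mapping.lookup (\<Sum>a\<in>Poly_Mapping.keys p. Poly_Mapping.single a (Poly_Mapping.lookup p a)) k" by simp
qed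

lemma sc_sub: "simplicial_complex n \<Delta> \<Longrightarrow> \<sigma> \<in> \<Delta> \<Longrightarrow> \<sigma> \<subseteq> {1..n}"
  unfolding simplicial_complex_def by (elim conjE) (rule bspec)

lemma sc_finite: "simplicial_complex n \<Delta> \<Longrightarrow> \<sigma> \<in> \<Delta> \<Longrightarrow> finite \<sigma>"
  by (rule finite_subset[OF sc_sub]) simp_all

lemma sc_down: "simplicial_complex n \<Delta> \<Longrightarrow> \<sigma> \<in> \<Delta> \<Longrightarrow> \<tau> \<subseteq> \<sigma> \<Longrightarrow> \<tau> \<in> \<Delta>"
  unfolding simplicial_complex_def by (elim conjE) (drule bspec, assumption, erule allE, erule mp)

lemma sc_single: "simplicial_complex n \<Delta> \<Longrightarrow> i \<in> {1..n} \<Longrightarrow> {i} \<in> \<Delta>"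
  unfolding simplicial_complex_def by (elim conjE) (erule bspec)

definition Zset :: "nat \<Rightarrow> nat set set \<Rightarrow> 'k::comm_ring_1 mpoly set" where
  "Zset n \<Delta> = {p \<in> polyring n. \<forall>\<sigma>\<in>\<Delta>. Poly_Mapping.lookup p (sq \<sigma>) = 0}"

lemma Zset_iff: "p \<in> Zset n \<Delta> \<longleftrightarrow> p \<in> polyring n \<and> (\<forall>\<sigma>\<in>\<Delta>. Poly_Mapping.lookup p (sq \<sigma>) = 0)"
  by (simp add: Zset_def)

lemma var_sq: "(var i :: 'k::comm_ring_1 mpoly) ^ 2 = Poly_Mapping.single (Poly_Mapping.single i 2) 1"
proof -
  have "(var i :: 'k mpoly) ^ 2 = var i * var i" by (simp add: power2_eq_square)
  also have "\<dots> = Poly_Mapping.single (Poly_Mapping.single i 1 + Poly_Mapping.single i 1) 1"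
    by (simp add: var_def mult_single)
  also have "Poly_Mapping.single i 1 + Poly_Mapping.single i 1 = Poly_Mapping.single i (2::nat)"
    by (metis one_add_one single_add)
  finally show ?thesis .
qed

lemma Zset_ideal:
  assumes sc: "simplicial_complex n \<Delta>"
  shows "is_ideal n (Zset n \<Delta> :: 'k::comm_ring_1 mpoly set)"
proof -
  have 3: "r * p \<in> Zset n \<Delta>" if p: "p \<in> Zset n \<Delta>" and r: "r \<in> polyring n" for p r :: "'k mpoly"
  proof -
    have pr: "r * p \<in> polyring n" using p r by (simp add: Zset_def polyring_mult)
    have "Poly_Mapping.lookup (r * p) (sq \<sigma>) = 0" if \<sigma>: "\<sigma> \<in> \<Delta>" for \<sigma>
    proof -
      have fin: "finite \<sigma>" using sc \<sigma> by (rule sc_finite)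
      have inner: "(\<lambda>q. Poly_Mapping.lookup p q when sq \<sigma> = l + q) = (\<lambda>q. 0)" for l
      proof
        fix q
        show "(Poly_Mapping.lookup p q when sq \<sigma> = l + q) = 0"
        proof (cases "sq \<sigma> = l + q")
          case True
          from sq_split[OF fin True] have "Poly_Mapping.keys q \<subseteq> \<sigma>" "q = sq (Poly_Mapping.keys q)" by auto
          moreover have "Poly_Mapping.keys q \<in> \<Delta>" using sc_down[OF sc \<sigma> calculation(1)] .
          moreover have "\<forall>\<sigma>\<in>\<Delta>. Poly_Mapping.lookup p (sq \<sigma>) = 0" using p unfolding Zset_iff by (elim conjE)
          ultimately have "Poly_Mapping.lookup p q = 0" by (metis (no_types, lifting))
          thus ?thesis by simp
        qed simp
      qed
      show ?thesis unfolding lookup_mult inner by simp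
    qed
    thus ?thesis using pr by (simp add: Zset_def)
  qed
  have 1: "Zset n \<Delta> \<subseteq> polyring n" by (auto simp: Zset_def)
  have 2: "(0::'k mpoly) \<in> Zset n \<Delta>" by (simp add: Zset_def)
  have 4: "a + b \<in> Zset n \<Delta>" if "a \<in> Zset n \<Delta>" "b \<in> Zset n \<Delta>" for a b :: "'k mpoly"
    using that by (simp add: Zset_def lookup_add polyring_add)
  show ?thesis unfolding is_ideal_def using 1 2 3 4 by simp
qed




definition Agens :: "nat \<Rightarrow> nat set set \<Rightarrow> 'k::comm_ring_1 mpoly set" where
  "Agens n \<Delta> = xset ` {\<tau>. \<tau> \<subseteq> {1..n} \<and> \<tau> \<notin> \<Delta>} \<union> {var i ^ 2 | i. i \<in> {1..n}}"

lemma A_ideal_Agens: "A_ideal n \<Delta> = ideal_gen n (Agens n \<Delta>)"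
  by (simp add: A_ideal_def Agens_def)

lemma Agens_poly: "Agens n \<Delta> \<subseteq> polyring n"
  unfolding Agens_def by (auto intro!: polyring_xset polyring_power polyring_var)

lemma A_ideal_ideal: "is_ideal n (A_ideal n \<Delta>)"
  unfolding A_ideal_Agens by (rule ideal_gen_ideal[OF Agens_poly])

lemma Agens_Zset:
  assumes sc: "simplicial_complex n \<Delta>"
  shows "Agens n \<Delta> \<subseteq> (Zset n \<Delta> :: 'k::comm_ring_1 mpoly set)"
proof
  fix g :: "'k mpoly" assume g: "g \<in> Agens n \<Delta>"
  have gp: "g \<in> polyring n" by (rule subsetD[OF Agens_poly g])
  show "g \<in> Zset n \<Delta>" unfolding Zset_iff
  proof (intro conjI ballI gp)
    fix \<sigma> assume \<sigma>: "\<sigma> \<in> \<Delta>"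
    have fin: "finite \<sigma>" using sc \<sigma> by (rule sc_finite)
    from g consider (a) \<tau> where "\<tau> \<subseteq> {1..n}" "\<tau> \<notin> \<Delta>" "g = xset \<tau>" | (b) i where "g = var i ^ 2"
      unfolding Agens_def by blast
    thus "Poly_Mapping.lookup g (sq \<sigma>) = 0"
    proof cases
      case a
      have ft: "finite \<tau>" using a(1) finite_subset by blast
      have "\<tau> \<noteq> \<sigma>" using a(2) \<sigma> by auto
      hence "sq \<tau> \<noteq> sq \<sigma>" using sq_inj[OF ft fin] by simp
      thus ?thesis using a(3) by (simp add: xset_eq lookup_single)
    next
      case b
      have "Poly_Mapping.single i (2::nat) \<noteq> sq \<sigma>"
      proof
        assume "Poly_Mapping.single i (2::nat) = sq \<sigma>"
        hence "Poly_Mapping.lookup (Poly_Mapping.single i (2::nat)) i = Poly_Mapping.lookup (sq \<sigma>) i" by simp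
        thus False using fin by (simp add: lookup_sq split: if_splits)
      qed
      thus ?thesis using b by (simp add: var_sq lookup_single)
    qed
  qed
qed

lemma single_in_A:
  assumes sc: "simplicial_complex n \<Delta>" and a: "Poly_Mapping.keys a \<subseteq> {1..n}"
    and nf: "\<not> (\<exists>\<sigma>\<in>\<Delta>. a = sq \<sigma>)"
  shows "(Poly_Mapping.single a c :: 'k::comm_ring_1 mpoly) \<in> A_ideal n \<Delta>"
proof (cases "\<exists>i. Poly_Mapping.lookup a i \<ge> 2")
  case True
  then obtain i where i: "Poly_Mapping.lookup a i \<ge> 2" by blast
  hence "i \<in> Poly_Mapping.keys a" by (simp add: in_keys_iff)
  hence iin: "i \<in> {1..n}" using a by (rule subsetD[rotated])
  define b where "b = a - Poly_Mapping.single i 2"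
  have ab: "a = b + Poly_Mapping.single i 2"
    by (rule poly_mapping_eqI) (use i in \<open>auto simp: b_def lookup_add lookup_minus lookup_single when_def\<close>)
  have bk: "Poly_Mapping.keys b \<subseteq> {1..n}"
  proof
    fix j assume "j \<in> Poly_Mapping.keys b"
    hence "j \<in> Poly_Mapping.keys a" unfolding ab keys_add_nat by simp
    thus "j \<in> {1..n}" by (rule subsetD[OF a])
  qed
  have "Poly_Mapping.single a c = Poly_Mapping.single b c * (var i ^ 2 :: 'k mpoly)"
    unfolding var_sq ab by (simp add: mult_single)
  moreover have "var i ^ 2 \<in> A_ideal n \<Delta>"
    unfolding A_ideal_Agens
    by (rule subsetD[OF ideal_gen_sub]) (use iin in \<open>auto simp: Agens_def\<close>)
  ultimately show ?thesis
    using ideal_mult[OF A_ideal_ideal _ polyring_single[OF bk]] by simp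
next
  case False
  hence le: "Poly_Mapping.lookup a i \<le> 1" for i
  proof -
    have "\<not> 2 \<le> Poly_Mapping.lookup a i" using False by simp
    thus ?thesis by linarith
  qed
  let ?\<sigma> = "Poly_Mapping.keys a"
  have fin: "finite ?\<sigma>" by simp
  have asq: "a = sq ?\<sigma>"
  proof (rule poly_mapping_eqI)
    fix j show "Poly_Mapping.lookup a j = Poly_Mapping.lookup (sq ?\<sigma>) j"
      using le[of j] by (simp add: lookup_sq in_keys_iff)
  qed
  hence nd: "?\<sigma> \<notin> \<Delta>" using nf by blast
  have "Poly_Mapping.single a c = const c * (xset ?\<sigma> :: 'k mpoly)"
    by (subst asq) (simp add: xset_eq const_def mult_single)
  moreover have "xset ?\<sigma> \<in> A_ideal n \<Delta>"
    unfolding A_ideal_Agens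
    by (rule subsetD[OF ideal_gen_sub]) (use a nd in \<open>auto simp: Agens_def\<close>)
  ultimately show ?thesis
    using ideal_mult[OF A_ideal_ideal _ polyring_const] by simp
qed

lemma A_ideal_char:
  assumes sc: "simplicial_complex n \<Delta>"
  shows "p \<in> (A_ideal n \<Delta> :: 'k::comm_ring_1 mpoly set) \<longleftrightarrow>
         p \<in> polyring n \<and> (\<forall>\<sigma>\<in>\<Delta>. Poly_Mapping.lookup p (sq \<sigma>) = 0)"
proof
  assume "p \<in> A_ideal n \<Delta>"
  moreover have "A_ideal n \<Delta> \<subseteq> (Zset n \<Delta> :: 'k mpoly set)"
    unfolding A_ideal_Agens by (rule ideal_gen_least[OF Zset_ideal[OF sc] Agens_Zset[OF sc]])
  ultimately have "p \<in> Zset n \<Delta>" by (rule subsetD[rotated])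
  thus "p \<in> polyring n \<and> (\<forall>\<sigma>\<in>\<Delta>. Poly_Mapping.lookup p (sq \<sigma>) = 0)" unfolding Zset_iff .
next
  assume H: "p \<in> polyring n \<and> (\<forall>\<sigma>\<in>\<Delta>. Poly_Mapping.lookup p (sq \<sigma>) = 0)"
  have "(\<Sum>a\<in>Poly_Mapping.keys p. Poly_Mapping.single a (Poly_Mapping.lookup p a)) \<in> A_ideal n \<Delta>"
  proof (rule ideal_sum[OF A_ideal_ideal])
    fix a assume a: "a \<in> Poly_Mapping.keys p"
    have "\<forall>m\<in>Poly_Mapping.keys p. Poly_Mapping.keys m \<subseteq> {1..n}" using H unfolding polyring_iff by (elim conjE)
    hence ak: "Poly_Mapping.keys a \<subseteq> {1..n}" using a by (rule bspec)
    have "\<not> (\<exists>\<sigma>\<in>\<Delta>. a = sq \<sigma>)"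
    proof
      assume "\<exists>\<sigma>\<in>\<Delta>. a = sq \<sigma>"
      then obtain \<sigma> where "\<sigma> \<in> \<Delta>" "a = sq \<sigma>" by blast
      hence "Poly_Mapping.lookup p a = 0" using H by simp
      thus False using a by (simp add: in_keys_iff)
    qed
    thus "Poly_Mapping.single a (Poly_Mapping.lookup p a) \<in> A_ideal n \<Delta>"
      by (rule single_in_A[OF sc ak])
  qed
  thus "p \<in> A_ideal n \<Delta>" using poly_sum_monomials[of p] by simp
qed




definition lin :: "nat \<Rightarrow> (nat \<Rightarrow> 'k) \<Rightarrow> 'k::comm_ring_1 mpoly" where
  "lin n a = (\<Sum>i\<in>{1..n}. const (a i) * var i)"

lemma const_var: "const c * var i = Poly_Mapping.single (Poly_Mapping.single i 1) c"
  by (simp add: const_def var_def mult_single)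

lemma lookup_cvar_mult_sq:
  assumes "finite \<sigma>"
  shows "Poly_Mapping.lookup (const c * var i * p) (sq \<sigma>) = (if i \<in> \<sigma> then c * Poly_Mapping.lookup p (sq (\<sigma> - {i})) else 0)"
  unfolding mult.assoc lookup_const_mult lookup_var_mult_sq[OF assms] by simp

lemma lookup_lin_mult:
  assumes "\<sigma> \<subseteq> {1..n}"
  shows "Poly_Mapping.lookup (lin n a * p) (sq \<sigma>) = (\<Sum>i\<in>\<sigma>. a i * Poly_Mapping.lookup p (sq (\<sigma> - {i})))"
proof -
  have fin: "finite \<sigma>" using assms finite_subset by blast
  have "Poly_Mapping.lookup (lin n a * p) (sq \<sigma>) = (\<Sum>i\<in>{1..n}. Poly_Mapping.lookup (const (a i) * var i * p) (sq \<sigma>))"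
    unfolding lin_def sum_distrib_right lookup_sum ..
  also have "\<dots> = (\<Sum>i\<in>{1..n}. if i \<in> \<sigma> then a i * Poly_Mapping.lookup p (sq (\<sigma> - {i})) else 0)"
    unfolding lookup_cvar_mult_sq[OF fin] ..
  also have "\<dots> = (\<Sum>i\<in>\<sigma>. a i * Poly_Mapping.lookup p (sq (\<sigma> - {i})))"
  proof -
    have "{1..n} \<inter> \<sigma> = \<sigma>" using assms by blast
    thus ?thesis by (simp add: sum.If_cases)
  qed
  finally show ?thesis .
qed

lemma sq_empty: "sq {} = 0" by (simp add: sq_def)

lemma sq_eq_0: "finite \<sigma> \<Longrightarrow> sq \<sigma> = 0 \<longleftrightarrow> \<sigma> = {}"
  using sq_inj[of \<sigma> "{}"] by (simp add: sq_empty)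

lemma lookup_lin_pow:
  assumes "\<sigma> \<subseteq> {1..n}"
  shows "Poly_Mapping.lookup (lin n c ^ k) (sq \<sigma>) = (if card \<sigma> = k then fact k * (\<Prod>j\<in>\<sigma>. c j) else 0)"
  using assms
proof (induction k arbitrary: \<sigma>)
  case 0
  have fin: "finite \<sigma>" using 0 finite_subset by blast
  show ?case using fin by (simp add: lookup_one when_def sq_eq_0)
next
  case (Suc k)
  have fin: "finite \<sigma>" using Suc.prems finite_subset by blast
  have "Poly_Mapping.lookup (lin n c ^ Suc k) (sq \<sigma>) = (\<Sum>i\<in>\<sigma>. c i * Poly_Mapping.lookup (lin n c ^ k) (sq (\<sigma> - {i})))"
    unfolding power_Suc by (rule lookup_lin_mult[OF Suc.prems])
  also have "\<dots> = (\<Sum>i\<in>\<sigma>. c i * (if card (\<sigma> - {i}) = k then fact k * (\<Prod>j\<in>\<sigma> - {i}. c j) else 0))"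
  proof (rule sum.cong[OF refl])
    fix i assume "i \<in> \<sigma>"
    have "\<sigma> - {i} \<subseteq> {1..n}" using Suc.prems by blast
    thus "c i * Poly_Mapping.lookup (lin n c ^ k) (sq (\<sigma> - {i})) = c i * (if card (\<sigma> - {i}) = k then fact k * (\<Prod>j\<in>\<sigma> - {i}. c j) else 0)"
      using Suc.IH by simp
  qed
  also have "\<dots> = (if card \<sigma> = Suc k then fact (Suc k) * (\<Prod>j\<in>\<sigma>. c j) else 0)"
  proof (cases "card \<sigma> = Suc k")
    case True
    have "(\<Sum>i\<in>\<sigma>. c i * (if card (\<sigma> - {i}) = k then fact k * (\<Prod>j\<in>\<sigma> - {i}. c j) else 0))
        = (\<Sum>i\<in>\<sigma>. fact k * (\<Prod>j\<in>\<sigma>. c j))"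
    proof (rule sum.cong)
      fix i assume i: "i \<in> \<sigma>"
      have "card (\<sigma> - {i}) = k" using True i fin by simp
      moreover have "(\<Prod>j\<in>\<sigma>. c j) = c i * (\<Prod>j\<in>\<sigma> - {i}. c j)" using i fin by (simp add: prod.remove)
      ultimately show "c i * (if card (\<sigma> - {i}) = k then fact k * (\<Prod>j\<in>\<sigma> - {i}. c j) else 0) = fact k * (\<Prod>j\<in>\<sigma>. c j)"
        by (simp add: algebra_simps)
    qed simp
    also have "\<dots> = of_nat (Suc k) * fact k * (\<Prod>j\<in>\<sigma>. c j)" using True by simp
    also have "\<dots> = fact (Suc k) * (\<Prod>j\<in>\<sigma>. c j)" by (simp add: fact_Suc)
    finally show ?thesis using True by simp
  next
    case False
    have "(\<Sum>i\<in>\<sigma>. c i * (if card (\<sigma> - {i}) = k then fact k * (\<Prod>j\<in>\<sigma> - {i}. c j) else 0)) = (\<Sum>i\<in>\<sigma>. 0)"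
    proof (rule sum.cong)
      fix i assume i: "i \<in> \<sigma>"
      have "card \<sigma> \<ge> 1" using i fin by (metis One_nat_def Suc_leI card_gt_0_iff empty_iff)
      hence "card (\<sigma> - {i}) \<noteq> k" using False i fin by simp
      thus "c i * (if card (\<sigma> - {i}) = k then fact k * (\<Prod>j\<in>\<sigma> - {i}. c j) else 0) = 0" by simp
    qed simp
    thus ?thesis using False by simp
  qed
  finally show ?case .
qed

lemma lin_poly: "lin n a \<in> polyring n"
  unfolding lin_def by (rule polyring_sum) (simp add: polyring_mult polyring_var)

lemma lin_hom: "lin n a \<in> Defs.hom n 1"
proof -
  have "Poly_Mapping.keys (lin n a) \<subseteq> (\<Union>i\<in>{1..n}. Poly_Mapping.keys (const (a i) * var i :: 'a mpoly))"
    unfolding lin_def by (rule keys_sum)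
  also have "\<dots> \<subseteq> (\<Union>i\<in>{1..n}. {Poly_Mapping.single i 1})"
    unfolding const_var by auto
  finally have "\<forall>m\<in>Poly_Mapping.keys (lin n a). mdeg m = 1" by (auto simp: mdeg_single)
  thus ?thesis using lin_poly by (simp add: Defs.hom_def)
qed

lemma single1_inj: "Poly_Mapping.single i (1::nat) = Poly_Mapping.single j 1 \<longleftrightarrow> i = j"
proof
  assume "Poly_Mapping.single i (1::nat) = Poly_Mapping.single j 1"
  hence "Poly_Mapping.keys (Poly_Mapping.single i (1::nat)) = Poly_Mapping.keys (Poly_Mapping.single j (1::nat))" by simp
  thus "i = j" by simp
qed simp

lemma hom1_repr:
  assumes f: "f \<in> Defs.hom n 1"
  shows "f = lin n (\<lambda>i. Poly_Mapping.lookup f (Poly_Mapping.single i 1))"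
proof (rule poly_mapping_eqI)
  fix k
  have L: "Poly_Mapping.lookup (lin n (\<lambda>i. Poly_Mapping.lookup f (Poly_Mapping.single i 1))) k
      = (\<Sum>i\<in>{1..n}. if Poly_Mapping.single i 1 = k then Poly_Mapping.lookup f k else 0)"
    unfolding lin_def lookup_sum const_var by (intro sum.cong) (simp_all add: lookup_single when_def)
  show "Poly_Mapping.lookup f k = Poly_Mapping.lookup (lin n (\<lambda>i. Poly_Mapping.lookup f (Poly_Mapping.single i 1))) k"
  proof (cases "\<exists>j\<in>{1..n}. k = Poly_Mapping.single j 1")
    case True
    then obtain j where j: "j \<in> {1..n}" "k = Poly_Mapping.single j 1" by blast
    have "(\<Sum>i\<in>{1..n}. if Poly_Mapping.single i 1 = k then Poly_Mapping.lookup f k else 0)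
        = (\<Sum>i\<in>{1..n}. if i = j then Poly_Mapping.lookup f k else 0)"
      using j(2) by (intro sum.cong) (simp_all add: single1_inj single1_inj[simplified])
    also have "\<dots> = Poly_Mapping.lookup f k" using j(1) by simp
    finally show ?thesis using L by simp
  next
    case False
    have "Poly_Mapping.lookup f k = 0"
    proof (rule ccontr)
      assume "Poly_Mapping.lookup f k \<noteq> 0"
      hence kk: "k \<in> Poly_Mapping.keys f" by (simp add: in_keys_iff)
      hence "mdeg k = 1" using f by (simp add: Defs.hom_def)
      then obtain j where j: "k = Poly_Mapping.single j 1" using mdeg_one_single by blast
      have "Poly_Mapping.keys k \<subseteq> {1..n}" using f kk by (simp add: Defs.hom_def polyring_def)
      hence "j \<in> {1..n}" using j by simp
      hence "\<exists>j'\<in>{1..n}. k = Poly_Mapping.single j' 1" using j by (intro bexI[of _ j])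
      thus False using False by contradiction
    qed
    moreover have "(\<Sum>i\<in>{1..n}. if Poly_Mapping.single i 1 = k then Poly_Mapping.lookup f k else 0) = 0"
      using False by (intro sum.neutral) auto
    ultimately show ?thesis using L by simp
  qed
qed

lemma xset_hom: "\<sigma> \<subseteq> {1..n} \<Longrightarrow> xset \<sigma> \<in> Defs.hom n (card \<sigma>)"
proof -
  assume s: "\<sigma> \<subseteq> {1..n}"
  have fin: "finite \<sigma>" using s finite_subset by blast
  show ?thesis using polyring_xset[OF s] fin by (simp add: Defs.hom_def xset_eq mdeg_sq)
qed




definition Dset :: "nat \<Rightarrow> nat \<Rightarrow> 'k::comm_ring_1 mpoly set" where
  "Dset n k = {p \<in> polyring n. \<forall>a\<in>Poly_Mapping.keys p. mdeg a \<ge> k}"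

lemma Dset_iff: "p \<in> Dset n k \<longleftrightarrow> p \<in> polyring n \<and> (\<forall>a\<in>Poly_Mapping.keys p. mdeg a \<ge> k)"
  by (simp add: Dset_def)

lemma Dset_mult:
  assumes p: "p \<in> Dset n a" and q: "q \<in> Dset n b"
  shows "p * q \<in> Dset n (a + b)"
proof -
  have pq: "p * q \<in> polyring n" using p q by (simp add: Dset_iff polyring_mult)
  have "mdeg m \<ge> a + b" if m: "m \<in> Poly_Mapping.keys (p * q)" for m
  proof -
    obtain x y where xy: "m = x + y" "x \<in> Poly_Mapping.keys p" "y \<in> Poly_Mapping.keys q"
      using m keys_mult by blast
    have "mdeg x \<ge> a" using p xy(2) unfolding Dset_iff by (elim conjE) (erule bspec)
    moreover have "mdeg y \<ge> b" using q xy(3) unfolding Dset_iff by (elim conjE) (erule bspec)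
    ultimately show ?thesis using xy(1) by (simp add: mdeg_add)
  qed
  thus ?thesis using pq by (simp add: Dset_iff)
qed

lemma Dset_ideal: "is_ideal n (Dset n k :: 'k::comm_ring_1 mpoly set)"
proof -
  have 1: "Dset n k \<subseteq> (polyring n :: 'k mpoly set)" unfolding Dset_def by (rule Collect_subset)
  have 2: "(0 :: 'k mpoly) \<in> Dset n k" by (simp add: Dset_iff)
  have 3: "a + b \<in> Dset n k" if "a \<in> Dset n k" "b \<in> Dset n k" for a b :: "'k mpoly"
  proof -
    have "a + b \<in> polyring n" using that by (simp add: Dset_iff polyring_add)
    moreover have "\<forall>m\<in>Poly_Mapping.keys (a + b). mdeg m \<ge> k"
    proof
      fix m assume "m \<in> Poly_Mapping.keys (a + b)"
      hence "m \<in> Poly_Mapping.keys a \<union> Poly_Mapping.keys b" by (rule subsetD[OF keys_add])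
      hence "m \<in> Poly_Mapping.keys a \<or> m \<in> Poly_Mapping.keys b" by (simp only: Un_iff)
      moreover have "\<forall>x\<in>Poly_Mapping.keys a. mdeg x \<ge> k" using that(1) unfolding Dset_iff by (elim conjE)
      moreover have "\<forall>x\<in>Poly_Mapping.keys b. mdeg x \<ge> k" using that(2) unfolding Dset_iff by (elim conjE)
      ultimately show "mdeg m \<ge> k" by (elim disjE) (erule bspec, assumption)+
    qed
    ultimately show ?thesis by (simp add: Dset_iff)
  qed
  have 4: "r * a \<in> Dset n k" if "a \<in> Dset n k" "r \<in> polyring n" for a r :: "'k mpoly"
  proof -
    have "r \<in> Dset n 0" using that(2) by (simp add: Dset_iff)
    from Dset_mult[OF this that(1)] show ?thesis by simp
  qed
  show ?thesis unfolding is_ideal_def using 1 2 3 4 by simp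
qed

lemma prod_single: "(\<Prod>x\<in>A. Poly_Mapping.single (h x) (1::'k::comm_ring_1)) = Poly_Mapping.single (\<Sum>x\<in>A. h x) 1"
  by (induction A rule: infinite_finite_induct) (simp_all add: mult_single)

lemma prod_list_poly: "set xs \<subseteq> polyring n \<Longrightarrow> prod_list xs \<in> polyring n"
  by (induction xs) (simp_all add: polyring_mult)

lemma prod_list_Dset: "set xs \<subseteq> Dset n k \<Longrightarrow> prod_list xs \<in> Dset n (k * length xs)"
proof (induction xs)
  case Nil
  show ?case by (simp add: Dset_iff)
next
  case (Cons x xs)
  have "x \<in> Dset n k" using Cons.prems by simp
  from Dset_mult[OF this Cons.IH] Cons.prems show ?case by simp
qed

lemma ideal_pow_ideal:
  assumes "is_ideal n P"
  shows "is_ideal n (ideal_pow n P k)"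
  unfolding ideal_pow_def
proof (rule ideal_gen_ideal)
  show "{prod_list xs |xs. length xs = k \<and> set xs \<subseteq> P} \<subseteq> polyring n"
  proof
    fix p assume "p \<in> {prod_list xs |xs. length xs = k \<and> set xs \<subseteq> P}"
    then obtain xs where "p = prod_list xs" "set xs \<subseteq> P" by blast
    moreover have "P \<subseteq> polyring n" using assms by (rule ideal_sub)
    ultimately have "set xs \<subseteq> polyring n" by (meson subset_trans)
    thus "p \<in> polyring n" using \<open>p = prod_list xs\<close> prod_list_poly by simp
  qed
qed

lemma ideal_pow_gen: "length xs = k \<Longrightarrow> set xs \<subseteq> P \<Longrightarrow> prod_list xs \<in> ideal_pow n P k"
  unfolding ideal_pow_def by (rule subsetD[OF ideal_gen_sub]) blast

lemma prime_var:
  fixes P :: "'k::comm_ring_1 mpoly set"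
  assumes P: "is_prime_ideal n P" and fin: "finite A" and A: "A \<subseteq> {1..n}"
    and pr: "(\<Prod>i\<in>A. var i) \<in> P"
  shows "\<exists>i\<in>A. var i \<in> P"
  using fin A pr
proof (induction A rule: finite_induct)
  case empty
  have PI: "is_ideal n P" using P by (simp add: is_prime_ideal_def)
  have "1 \<in> P" using empty by simp
  have "polyring n \<subseteq> P"
  proof
    fix r :: "'k mpoly" assume "r \<in> polyring n"
    from ideal_mult'[OF PI \<open>1 \<in> P\<close> this] show "r \<in> P" by simp
  qed
  moreover have "P \<subseteq> polyring n" using PI by (rule ideal_sub)
  ultimately show ?case using P by (simp add: is_prime_ideal_def)
next
  case (insert a A)
  have m: "var a * (\<Prod>i\<in>A. var i) \<in> P" using insert by simp
  have va: "var a \<in> polyring n" using insert.prems by (intro polyring_var) simp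
  have pa: "(\<Prod>i\<in>A. var i) \<in> polyring n" using insert.prems
    by (intro polyring_prod polyring_var) auto
  have H: "\<forall>a\<in>polyring n. \<forall>b\<in>polyring n. a * b \<in> P \<longrightarrow> a \<in> P \<or> b \<in> P"
    using P unfolding is_prime_ideal_def by (elim conjE)
  have "var a \<in> P \<or> (\<Prod>i\<in>A. var i) \<in> P" using H va pa m by blast
  thus ?case using insert by auto
qed




lemma facets_sub: "facets \<Delta> \<subseteq> \<Delta>"
  unfolding facets_def by (rule Collect_subset)

lemma sc_fin_Delta: "simplicial_complex n \<Delta> \<Longrightarrow> finite \<Delta>"
proof -
  assume sc: "simplicial_complex n \<Delta>"
  have "\<Delta> \<subseteq> Pow {1..n}" using sc_sub[OF sc] by blast
  thus ?thesis by (rule finite_subset) simp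
qed

lemma two_elems:
  assumes "card A \<ge> 2"
  obtains x y where "x \<in> A" "y \<in> A" "x \<noteq> y"
proof -
  have fin: "finite A" using assms by (metis card.infinite not_numeral_le_zero)
  have "A \<noteq> {}" using assms by auto
  then obtain x where x: "x \<in> A" by blast
  have "card (A - {x}) \<ge> 1" using assms x fin by simp
  hence "A - {x} \<noteq> {}" by (intro notI) simp
  then obtain y where "y \<in> A - {x}" by blast
  thus ?thesis using that x by blast
qed

lemma not_ntf:
  fixes \<Delta> :: "nat set set" and n d :: nat
  assumes sc: "simplicial_complex n \<Delta>"
    and pure: "\<forall>F\<in>facets \<Delta>. card F = d"
    and noexact: "\<not> (\<exists>C. \<forall>F\<in>facets \<Delta>. card (F \<inter> C) = 1)"
    and d1: "d \<ge> 1"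
  shows "\<not> normally_torsion_free n (facet_ideal n \<Delta> :: 'k::field mpoly set)"
proof
  assume ntf: "normally_torsion_free n (facet_ideal n \<Delta> :: 'k mpoly set)"
  define FS where "FS = facets \<Delta>"
  define m where "m = card FS"
  define I where "I = (facet_ideal n \<Delta> :: 'k mpoly set)"
  have FSD: "FS \<subseteq> \<Delta>" unfolding FS_def by (rule facets_sub)
  have finFS: "finite FS" using sc_fin_Delta[OF sc] FSD by (rule finite_subset[rotated])
  have Fsub: "F \<subseteq> {1..n}" if "F \<in> FS" for F using sc_sub[OF sc] FSD that by blast
  have Ffin: "finite F" if "F \<in> FS" for F using Fsub[OF that] finite_subset by blast
  have gens: "xset ` FS \<subseteq> (polyring n :: 'k mpoly set)" using Fsub polyring_xset by blast
  have Iid: "is_ideal n I" unfolding I_def facet_ideal_def FS_def[symmetric] by (rule ideal_gen_ideal[OF gens])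
  have xI: "xset F \<in> I" if "F \<in> FS" for F
    unfolding I_def facet_ideal_def FS_def[symmetric] by (rule subsetD[OF ideal_gen_sub]) (use that in blast)
  define g :: "'k mpoly" where "g = (\<Prod>F\<in>FS. xset F)"
  have gpoly: "g \<in> polyring n" unfolding g_def by (rule polyring_prod) (use Fsub polyring_xset in blast)
  have notin: "g \<notin> ideal_pow n I (Suc m)"
  proof
    assume gin: "g \<in> ideal_pow n I (Suc m)"
    have ID: "I \<subseteq> Dset n d"
      unfolding I_def facet_ideal_def FS_def[symmetric]
    proof (rule ideal_gen_least[OF Dset_ideal])
      show "xset ` FS \<subseteq> Dset n d"
      proof
        fix p assume "p \<in> xset ` FS"
        then obtain F where F: "F \<in> FS" "p = xset F" by blast
        have "card F = d" using pure F(1) unfolding FS_def by blast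
        thus "p \<in> Dset n d" using F polyring_xset[OF Fsub[OF F(1)]] Ffin[OF F(1)]
          by (simp add: Dset_iff xset_eq mdeg_sq)
      qed
    qed
    have "ideal_pow n I (Suc m) \<subseteq> Dset n (d * Suc m)"
      unfolding ideal_pow_def
    proof (rule ideal_gen_least[OF Dset_ideal])
      show "{prod_list xs |xs. length xs = Suc m \<and> set xs \<subseteq> I} \<subseteq> Dset n (d * Suc m)"
      proof
        fix p assume "p \<in> {prod_list xs |xs. length xs = Suc m \<and> set xs \<subseteq> I}"
        then obtain xs where xs: "p = prod_list xs" "length xs = Suc m" "set xs \<subseteq> I" by blast
        have "set xs \<subseteq> Dset n d" using xs(3) ID by (rule subset_trans)
        from prod_list_Dset[OF this] show "p \<in> Dset n (d * Suc m)" using xs by simp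
      qed
    qed
    with gin have gD: "g \<in> Dset n (d * Suc m)" by blast
    have geq: "g = Poly_Mapping.single (\<Sum>F\<in>FS. sq F) 1"
      unfolding g_def xset_eq by (rule prod_single)
    have "mdeg (\<Sum>F\<in>FS. sq F) = (\<Sum>F\<in>FS. card F)"
      unfolding mdeg_sum using Ffin by (simp add: mdeg_sq)
    also have "\<dots> = (\<Sum>F\<in>FS. d)" using pure unfolding FS_def by simp
    also have "\<dots> = m * d" unfolding m_def by simp
    finally have md: "mdeg (\<Sum>F\<in>FS. sq F) = m * d" .
    have "(\<Sum>F\<in>FS. sq F) \<in> Poly_Mapping.keys g" unfolding geq by simp
    hence "mdeg (\<Sum>F\<in>FS. sq F) \<ge> d * Suc m" using gD unfolding Dset_iff by (elim conjE) (erule bspec)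
    thus False using md d1 by simp
  qed
  have inP: "g \<in> ideal_pow n P (Suc m)" if PA: "P \<in> Ass n I" for P :: "'k mpoly set"
  proof -
    obtain f where Pp: "is_prime_ideal n P" and f: "f \<in> polyring n" and Pc: "P = colon n I f"
      using PA unfolding Ass_def by blast
    have Pid: "is_ideal n P" using Pp by (simp add: is_prime_ideal_def)
    have IP: "I \<subseteq> P"
    proof
      fix r assume r: "r \<in> I"
      have "r \<in> polyring n" using r ideal_sub[OF Iid] by blast
      moreover have "r * f \<in> I" by (rule ideal_mult'[OF Iid r f])
      ultimately show "r \<in> P" unfolding Pc colon_def by simp
    qed
    define C where "C = {i \<in> {1..n}. var i \<in> P}"
    have hit: "\<exists>i\<in>F. var i \<in> P" if F: "F \<in> FS" for F
      by (rule prime_var[OF Pp Ffin[OF F] Fsub[OF F]]) (use xI[OF F] IP in \<open>auto simp: xset_def\<close>)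
    have hitC: "F \<inter> C \<noteq> {}" if F: "F \<in> FS" for F
      using hit[OF F] Fsub[OF F] unfolding C_def by blast
    obtain F1 where F1: "F1 \<in> FS" "card (F1 \<inter> C) \<noteq> 1" using noexact unfolding FS_def by blast
    have "card (F1 \<inter> C) \<ge> 2"
    proof -
      have "finite (F1 \<inter> C)" using Ffin[OF F1(1)] by simp
      hence "card (F1 \<inter> C) \<noteq> 0" using hitC[OF F1(1)] by simp
      thus ?thesis using F1(2) by linarith
    qed
    then obtain i1 j1 where ij: "i1 \<in> F1 \<inter> C" "j1 \<in> F1 \<inter> C" "i1 \<noteq> j1" by (rule two_elems)
    define \<phi> where "\<phi> F = (if F = F1 then i1 else (SOME i. i \<in> F \<inter> C))" for F
    have \<phi>: "\<phi> F \<in> F \<inter> C" if F: "F \<in> FS" for F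
    proof (cases "F = F1")
      case True thus ?thesis using ij by (simp add: \<phi>_def)
    next
      case False
      have "\<exists>i. i \<in> F \<inter> C" using hitC[OF F] by blast
      hence "(SOME i. i \<in> F \<inter> C) \<in> F \<inter> C" by (rule someI_ex)
      thus ?thesis using False by (simp add: \<phi>_def)
    qed
    have split: "xset F = var (\<phi> F) * xset (F - {\<phi> F})" if F: "F \<in> FS" for F
      unfolding xset_def using \<phi>[OF F] Ffin[OF F] by (simp add: prod.remove)
    have "g = (\<Prod>F\<in>FS. var (\<phi> F) * xset (F - {\<phi> F}))"
      unfolding g_def using split by (rule prod.cong[OF refl])
    also have "\<dots> = (\<Prod>F\<in>FS. var (\<phi> F)) * (\<Prod>F\<in>FS. xset (F - {\<phi> F}))"
      by (rule prod.distrib)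
    also have "(\<Prod>F\<in>FS. xset (F - {\<phi> F})) = xset (F1 - {i1}) * (\<Prod>F\<in>FS - {F1}. xset (F - {\<phi> F}))"
      using F1(1) finFS by (simp add: prod.remove \<phi>_def)
    also have "xset (F1 - {i1}) = var j1 * (xset (F1 - {i1} - {j1}) :: 'k mpoly)"
    proof -
      have "j1 \<in> F1 - {i1}" using ij by blast
      thus ?thesis unfolding xset_def using Ffin[OF F1(1)] by (simp add: prod.remove)
    qed
    finally have geq: "g = (var j1 * (\<Prod>F\<in>FS. var (\<phi> F))) * (xset (F1 - {i1} - {j1}) * (\<Prod>F\<in>FS - {F1}. xset (F - {\<phi> F})))"
      by (simp add: ac_simps)
    obtain fl where fl: "set fl = FS" "distinct fl" using finite_distinct_list[OF finFS] by blast
    define xs :: "'k mpoly list" where "xs = var j1 # map (\<lambda>F. var (\<phi> F)) fl"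
    have "length xs = Suc m" unfolding xs_def m_def using fl distinct_card by fastforce
    moreover have "set xs \<subseteq> P"
    proof -
      have "var j1 \<in> P" using ij unfolding C_def by blast
      moreover have "var (\<phi> F) \<in> P" if "F \<in> FS" for F using \<phi>[OF that] unfolding C_def by blast
      ultimately show ?thesis unfolding xs_def using fl by auto
    qed
    ultimately have "prod_list xs \<in> ideal_pow n P (Suc m)" by (rule ideal_pow_gen)
    moreover have "prod_list xs = var j1 * (\<Prod>F\<in>FS. var (\<phi> F))"
    proof -
      have "(\<Prod>F\<in>FS. var (\<phi> F) :: 'k mpoly) = prod_list (map (\<lambda>F. var (\<phi> F)) fl)"
        using fl by (metis prod.distinct_set_conv_list)
      thus ?thesis unfolding xs_def by simp
    qed
    moreover have "xset (F1 - {i1} - {j1}) * (\<Prod>F\<in>FS - {F1}. xset (F - {\<phi> F})) \<in> polyring n"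
    proof (rule polyring_mult)
      show "xset (F1 - {i1} - {j1}) \<in> polyring n" using Fsub[OF F1(1)] by (intro polyring_xset) blast
      show "(\<Prod>F\<in>FS - {F1}. xset (F - {\<phi> F})) \<in> polyring n"
        by (rule polyring_prod) (use Fsub in \<open>blast intro: polyring_xset\<close>)
    qed
    ultimately show ?thesis unfolding geq using ideal_mult'[OF ideal_pow_ideal[OF Pid]] by simp
  qed
  have "g \<in> symb_pow n I (Suc m)"
    unfolding symb_pow_def using gpoly inP by blast
  moreover have "symb_pow n I (Suc m) = ideal_pow n I (Suc m)"
    using ntf unfolding normally_torsion_free_def I_def by simp
  ultimately show False using notin by simp
qed




lemma la_set:
  fixes M :: "'r \<Rightarrow> 'c \<Rightarrow> 'k::field"
  assumes finR: "finite R" and finC: "finite Cs" and cardle: "card Cs \<le> card R"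
    and j0: "j0 \<in> Cs" "v j0 \<noteq> 0" and ker: "\<forall>r\<in>R. (\<Sum>j\<in>Cs. M r j * v j) = 0"
  shows "\<exists>u. (\<exists>r\<in>R. u r \<noteq> 0) \<and> (\<forall>j\<in>Cs. (\<Sum>r\<in>R. u r * M r j) = 0)"
proof -
  obtain er where er: "bij_betw er {..<card R} R" using ex_bij_betw_nat_finite_1 finR
    by (metis atLeast0LessThan ex_bij_betw_nat_finite)
  obtain ec where ec: "bij_betw ec {..<card Cs} Cs"
    by (metis atLeast0LessThan ex_bij_betw_nat_finite finC)
  define M' where "M' r j = M (er r) (ec j)" for r j
  define v' where "v' j = v (ec j)" for j
  obtain k0 where k0: "k0 < card Cs" "ec k0 = j0" using ec j0(1) unfolding bij_betw_def by (metis imageE lessThan_iff)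
  have ker': "\<forall>r<card R. (\<Sum>j<card Cs. M' r j * v' j) = 0"
  proof (intro allI impI)
    fix r assume r: "r < card R"
    have "(\<Sum>j<card Cs. M' r j * v' j) = (\<Sum>j\<in>Cs. M (er r) j * v j)"
      unfolding M'_def v'_def using sum.reindex_bij_betw[OF ec, of "\<lambda>j. M (er r) j * v j"] by simp
    also have "\<dots> = 0" using ker r er unfolding bij_betw_def by auto
    finally show "(\<Sum>j<card Cs. M' r j * v' j) = 0" .
  qed
  obtain u' where u': "\<exists>r<card R. u' r \<noteq> 0" "\<forall>j<card Cs. (\<Sum>r<card R. u' r * M' r j) = 0"
    using la_nat[of "card Cs" "card R" k0 v' M'] cardle k0 j0(2) ker' unfolding v'_def by auto
  define u where "u x = u' (the_inv_into {..<card R} er x)" for x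
  have inv: "the_inv_into {..<card R} er (er r) = r" if "r < card R" for r
    using er that by (simp add: bij_betw_def the_inv_into_f_f)
  have "\<exists>r\<in>R. u r \<noteq> 0"
  proof -
    obtain r where r: "r < card R" "u' r \<noteq> 0" using u'(1) by blast
    have "er r \<in> R" using er r(1) unfolding bij_betw_def by auto
    moreover have "u (er r) \<noteq> 0" using r inv unfolding u_def by simp
    ultimately show ?thesis by blast
  qed
  moreover have "\<forall>j\<in>Cs. (\<Sum>r\<in>R. u r * M r j) = 0"
  proof
    fix j assume j: "j \<in> Cs"
    obtain k where k: "k < card Cs" "ec k = j" using ec j unfolding bij_betw_def by (metis imageE lessThan_iff)
    have "(\<Sum>r\<in>R. u r * M r j) = (\<Sum>r<card R. u (er r) * M (er r) j)"
      using sum.reindex_bij_betw[OF er, of "\<lambda>r. u r * M r j"] by simp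
    also have "\<dots> = (\<Sum>r<card R. u' r * M' r k)"
      unfolding M'_def using inv k(2) by (intro sum.cong) (simp_all add: u_def)
    also have "\<dots> = 0" using u'(2) k(1) by simp
    finally show "(\<Sum>r\<in>R. u r * M r j) = 0" .
  qed
  ultimately show ?thesis by blast
qed

lemma face_in_facet:
  assumes sc: "simplicial_complex n \<Delta>" and \<sigma>: "\<sigma> \<in> \<Delta>"
  shows "\<exists>G\<in>facets \<Delta>. \<sigma> \<subseteq> G"
proof -
  obtain G where G: "G \<in> \<Delta>" "\<sigma> \<subseteq> G" "\<forall>b\<in>\<Delta>. G \<subseteq> b \<longrightarrow> G = b"
    using finite_has_maximal2[OF sc_fin_Delta[OF sc] \<sigma>] by blast
  have "G \<in> facets \<Delta>" unfolding facets_def using G by auto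
  thus ?thesis using G(2) by blast
qed




lemma coef_d:
  assumes \<sigma>: "\<sigma> \<subseteq> {1..n}" and d: "d \<ge> 1"
  shows "Poly_Mapping.lookup (lin n c ^ (d - 1) * lin n a) (sq \<sigma>)
       = (if card \<sigma> = d then fact (d - 1) * (\<Sum>i\<in>\<sigma>. a i * (\<Prod>j\<in>\<sigma> - {i}. c j)) else 0)"
proof -
  have fin: "finite \<sigma>" using \<sigma> finite_subset by blast
  have "Poly_Mapping.lookup (lin n c ^ (d - 1) * lin n a) (sq \<sigma>)
      = (\<Sum>i\<in>\<sigma>. a i * Poly_Mapping.lookup (lin n c ^ (d - 1)) (sq (\<sigma> - {i})))"
    unfolding mult.commute[of "lin n c ^ (d - 1)"] by (rule lookup_lin_mult[OF \<sigma>])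
  also have "\<dots> = (\<Sum>i\<in>\<sigma>. a i * (if card \<sigma> = d then fact (d - 1) * (\<Prod>j\<in>\<sigma> - {i}. c j) else 0))"
  proof (rule sum.cong[OF refl])
    fix i assume i: "i \<in> \<sigma>"
    have s: "\<sigma> - {i} \<subseteq> {1..n}" using \<sigma> by blast
    have "card (\<sigma> - {i}) = card \<sigma> - 1" using i fin by simp
    moreover have "card \<sigma> \<ge> 1" using i fin by (metis One_nat_def Suc_leI card_gt_0_iff empty_iff)
    ultimately have "card (\<sigma> - {i}) = d - 1 \<longleftrightarrow> card \<sigma> = d" using d by linarith
    thus "a i * Poly_Mapping.lookup (lin n c ^ (d - 1)) (sq (\<sigma> - {i}))
        = a i * (if card \<sigma> = d then fact (d - 1) * (\<Prod>j\<in>\<sigma> - {i}. c j) else 0)"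
      unfolding lookup_lin_pow[OF s] by simp
  qed
  also have "\<dots> = (if card \<sigma> = d then fact (d - 1) * (\<Sum>i\<in>\<sigma>. a i * (\<Prod>j\<in>\<sigma> - {i}. c j)) else 0)"
    by (simp add: sum_distrib_left ac_simps)
  finally show ?thesis .
qed

lemma lookup_lin_single:
  assumes "i \<in> {1..n}"
  shows "Poly_Mapping.lookup (lin n a) (sq {i}) = a i"
proof -
  have "Poly_Mapping.lookup (lin n a * 1) (sq {i}) = (\<Sum>j\<in>{i}. a j * Poly_Mapping.lookup 1 (sq ({i} - {j})))"
    using assms by (intro lookup_lin_mult) simp
  thus ?thesis by (simp add: sq_empty)
qed




lemma slp_fails:
  fixes \<Delta> :: "nat set set" and n d :: nat and C :: "nat set"
  assumes sc: "simplicial_complex n \<Delta>"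
    and pure: "\<forall>F\<in>facets \<Delta>. card F = d"
    and d2: "d \<ge> 2"
    and mge: "card (facets \<Delta>) \<ge> n"
    and ne: "facets \<Delta> \<noteq> {}"
    and exact: "\<forall>F\<in>facets \<Delta>. card (F \<inter> C) = 1"
  shows "\<not> strong_lefschetz n (A_ideal n \<Delta> :: 'k::field_char_0 mpoly set)"
proof
  assume "strong_lefschetz n (A_ideal n \<Delta> :: 'k mpoly set)"
  then obtain L :: "'k mpoly" where L: "L \<in> linear_forms n"
    and fr: "\<And>i j. full_rank_mult n (A_ideal n \<Delta>) (L ^ j) i j"
    unfolding strong_lefschetz_def by blast
  obtain c where Lc: "L = lin n c" using L unfolding linear_forms_def lin_def by blast
  define FS where "FS = facets \<Delta>"
  define J where "J = (A_ideal n \<Delta> :: 'k mpoly set)"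
  have FSD: "FS \<subseteq> \<Delta>" unfolding FS_def by (rule facets_sub)
  have finFS: "finite FS" using sc_fin_Delta[OF sc] FSD by (rule finite_subset[rotated])
  have Fsub: "F \<subseteq> {1..n}" if "F \<in> FS" for F using sc_sub[OF sc] FSD that by blast
  have Ffin: "finite F" if "F \<in> FS" for F using Fsub[OF that] finite_subset by blast
  have cardF: "card F = d" if "F \<in> FS" for F using pure that unfolding FS_def by blast
  have d1: "d \<ge> 1" using d2 by simp
  have face_card: "card \<sigma> = d \<Longrightarrow> \<sigma> \<in> FS" if s: "\<sigma> \<in> \<Delta>" for \<sigma>
  proof -
    assume cs: "card \<sigma> = d"
    obtain G where G: "G \<in> FS" "\<sigma> \<subseteq> G" using face_in_facet[OF sc s] unfolding FS_def by blast
    have "\<sigma> = G" using card_subset_eq[OF Ffin[OF G(1)] G(2)] cs cardF[OF G(1)] by simp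
    thus ?thesis using G(1) by simp
  qed
  obtain F00 where F00: "F00 \<in> FS" using ne unfolding FS_def by blast
  have "card F00 \<ge> 2" using cardF[OF F00] d2 by simp
  then obtain i00 where i00: "i00 \<in> F00" using two_elems by metis
  have i00n: "i00 \<in> {1..n}" using Fsub[OF F00] i00 by blast
  define ker where "ker v \<longleftrightarrow> (\<forall>F\<in>FS. (\<Sum>i\<in>F. v i * (\<Prod>j\<in>F - {i}. c j)) = 0)" for v :: "nat \<Rightarrow> 'k"
  have Msum: "(\<Sum>i\<in>{1..n}. (if i \<in> F then (\<Prod>j\<in>F - {i}. c j) else 0) * w i) = (\<Sum>i\<in>F. w i * (\<Prod>j\<in>F - {i}. c j))"
    if F: "F \<in> FS" for F and w :: "nat \<Rightarrow> 'k"
  proof -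
    have "(\<Sum>i\<in>{1..n}. (if i \<in> F then (\<Prod>j\<in>F - {i}. c j) else 0) * w i)
        = (\<Sum>i\<in>{1..n}. if i \<in> F then w i * (\<Prod>j\<in>F - {i}. c j) else 0)"
      by (intro sum.cong) simp_all
    also have "\<dots> = (\<Sum>i\<in>{1..n} \<inter> F. w i * (\<Prod>j\<in>F - {i}. c j))"
      by (simp add: sum.If_cases)
    also have "{1..n} \<inter> F = F" using Fsub[OF F] by blast
    finally show ?thesis .
  qed
  obtain v i0 where vker: "ker v" and v0: "i0 \<in> {1..n}" "v i0 \<noteq> 0"
  proof (cases "\<forall>i\<in>{1..n}. c i = 0")
    case True
    define v where "v i = (if i = i00 then (1::'k) else 0)" for i
    have "ker v" unfolding ker_def
    proof
      fix F assume F: "F \<in> FS"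
      show "(\<Sum>i\<in>F. v i * (\<Prod>j\<in>F - {i}. c j)) = 0"
      proof (rule sum.neutral, rule ballI)
        fix i assume i: "i \<in> F"
        have "card (F - {i}) \<ge> 1" using cardF[OF F] d2 i Ffin[OF F] by simp
        hence "F - {i} \<noteq> {}" by (intro notI) simp
        then obtain j where j: "j \<in> F - {i}" by blast
        have "c j = 0" using True Fsub[OF F] j by blast
        hence "(\<Prod>j\<in>F - {i}. c j) = 0" using j Ffin[OF F] by (meson finite_Diff prod_zero)
        thus "v i * (\<Prod>j\<in>F - {i}. c j) = 0" by simp
      qed
    qed
    moreover have "v i00 \<noteq> 0" by (simp add: v_def)
    ultimately show ?thesis using that i00n by blast
  next
    case False
    then obtain i0 where i0: "i0 \<in> {1..n}" "c i0 \<noteq> 0" by blast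
    define e where "e i = (of_nat d * (if i \<in> C then 1 else 0) - 1 :: 'k)" for i
    define v where "v i = c i * e i" for i
    have "ker v" unfolding ker_def
    proof
      fix F assume F: "F \<in> FS"
      have "(\<Sum>i\<in>F. v i * (\<Prod>j\<in>F - {i}. c j)) = (\<Sum>i\<in>F. e i * (\<Prod>j\<in>F. c j))"
      proof (rule sum.cong[OF refl])
        fix i assume i: "i \<in> F"
        have "(\<Prod>j\<in>F. c j) = c i * (\<Prod>j\<in>F - {i}. c j)" using i Ffin[OF F] by (simp add: prod.remove)
        thus "v i * (\<Prod>j\<in>F - {i}. c j) = e i * (\<Prod>j\<in>F. c j)" by (simp add: v_def ac_simps)
      qed
      also have "\<dots> = (\<Sum>i\<in>F. e i) * (\<Prod>j\<in>F. c j)" by (simp add: sum_distrib_right)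
      also have "(\<Sum>i\<in>F. e i) = of_nat d * of_nat (card (F \<inter> C)) - of_nat (card F)"
      proof -
        have "(\<Sum>i\<in>F. e i) = of_nat d * (\<Sum>i\<in>F. (if i \<in> C then 1 else 0)) - (\<Sum>i\<in>F. 1)"
          unfolding e_def by (simp add: sum_subtractf sum_distrib_left)
        also have "(\<Sum>i\<in>F. (if i \<in> C then 1 else 0)) = (of_nat (card (F \<inter> C)) :: 'k)"
          using Ffin[OF F] by (simp add: sum.If_cases)
        finally show ?thesis by simp
      qed
      also have "\<dots> = 0" using exact F cardF[OF F] unfolding FS_def by simp
      finally show "(\<Sum>i\<in>F. v i * (\<Prod>j\<in>F - {i}. c j)) = 0" by simp
    qed
    moreover have "v i0 \<noteq> 0"
    proof -
      have "(of_nat d :: 'k) \<noteq> 1" using d2 by (metis of_nat_eq_1_iff numeral_le_one_iff semiring_norm(69))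
      hence "e i0 \<noteq> 0" unfolding e_def by simp
      thus ?thesis using i0 by (simp add: v_def)
    qed
    ultimately show ?thesis using that i0(1) by blast
  qed
  have frd: "full_rank_mult n J (L ^ (d - 1)) 1 (d - 1)" using fr unfolding J_def by blast
  show False
  proof (cases "\<forall>f\<in>Defs.hom n 1. L ^ (d - 1) * f \<in> J \<longrightarrow> f \<in> J")
    case True
    define f where "f = lin n v"
    have fh: "f \<in> Defs.hom n 1" unfolding f_def by (rule lin_hom)
    have "L ^ (d - 1) * f \<in> J" unfolding J_def A_ideal_char[OF sc]
    proof (intro conjI ballI)
      show "L ^ (d - 1) * f \<in> polyring n" unfolding Lc f_def
        by (intro polyring_mult polyring_power lin_poly)
      fix \<sigma> assume s: "\<sigma> \<in> \<Delta>"
      show "Poly_Mapping.lookup (L ^ (d - 1) * f) (sq \<sigma>) = 0"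
      proof (cases "card \<sigma> = d")
        case True
        hence "\<sigma> \<in> FS" using face_card[OF s] by simp
        thus ?thesis unfolding Lc f_def coef_d[OF sc_sub[OF sc s] d1] using vker unfolding ker_def by simp
      next
        case False
        thus ?thesis unfolding Lc f_def coef_d[OF sc_sub[OF sc s] d1] by simp
      qed
    qed
    hence "f \<in> J" using True fh by blast
    moreover have "Poly_Mapping.lookup f (sq {i0}) \<noteq> 0" unfolding f_def lookup_lin_single[OF v0(1)] by (rule v0(2))
    moreover have "{i0} \<in> \<Delta>" by (rule sc_single[OF sc v0(1)])
    ultimately show False unfolding J_def A_ideal_char[OF sc] by blast
  next
    case False
    hence surj: "\<forall>h\<in>Defs.hom n (1 + (d - 1)). \<exists>f\<in>Defs.hom n 1. h - L ^ (d - 1) * f \<in> J"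
      using frd unfolding full_rank_mult_def by blast
    define M where "M F i = (if i \<in> F then (\<Prod>j\<in>F - {i}. c j) else 0)" for F i
    have "\<exists>u. (\<exists>F\<in>FS. u F \<noteq> 0) \<and> (\<forall>j\<in>{1..n}. (\<Sum>F\<in>FS. u F * M F j) = 0)"
    proof (rule la_set[of FS "{1..n}" i0 v M])
      show "finite FS" by (rule finFS)
      show "i0 \<in> {1..n}" "v i0 \<noteq> 0" by (rule v0(1), rule v0(2))
      show "finite {1..n}" by simp
      show "card {1..n} \<le> card FS" using mge unfolding FS_def by simp
      show "\<forall>F\<in>FS. (\<Sum>j\<in>{1..n}. M F j * v j) = 0"
        using vker Msum unfolding ker_def M_def by simp
    qed
    then obtain u where u: "\<exists>F\<in>FS. u F \<noteq> 0" "\<forall>j\<in>{1..n}. (\<Sum>F\<in>FS. u F * M F j) = 0" by blast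
    then obtain F0 where F0: "F0 \<in> FS" "u F0 \<noteq> 0" by blast
    have "xset F0 \<in> Defs.hom n (1 + (d - 1))"
      using xset_hom[OF Fsub[OF F0(1)]] cardF[OF F0(1)] d1 by simp
    then obtain f where f: "f \<in> Defs.hom n 1" "xset F0 - L ^ (d - 1) * f \<in> J" using surj by blast
    define a where "a i = Poly_Mapping.lookup f (Poly_Mapping.single i 1)" for i
    have fa: "f = lin n a" unfolding a_def by (rule hom1_repr[OF f(1)])
    have eqF: "(if F = F0 then 1 else 0) = fact (d - 1) * (\<Sum>i\<in>{1..n}. M F i * a i)" if F: "F \<in> FS" for F
    proof -
      have "Poly_Mapping.lookup (xset F0 - L ^ (d - 1) * f) (sq F) = 0"
        using f(2) FSD F unfolding J_def A_ideal_char[OF sc] by blast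
      moreover have "Poly_Mapping.lookup (xset F0 :: 'k mpoly) (sq F) = (if F = F0 then 1 else 0)"
        using sq_inj[OF Ffin[OF F0(1)] Ffin[OF F]] by (simp add: xset_eq lookup_single when_def)
      moreover have "Poly_Mapping.lookup (L ^ (d - 1) * f) (sq F) = fact (d - 1) * (\<Sum>i\<in>F. a i * (\<Prod>j\<in>F - {i}. c j))"
        unfolding Lc fa coef_d[OF Fsub[OF F] d1] using cardF[OF F] by simp
      moreover have "(\<Sum>i\<in>{1..n}. M F i * a i) = (\<Sum>i\<in>F. a i * (\<Prod>j\<in>F - {i}. c j))"
        unfolding M_def by (rule Msum[OF F])
      ultimately show ?thesis by (simp add: lookup_minus)
    qed
    have "u F0 = (\<Sum>F\<in>FS. if F = F0 then u F else 0)"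
      using F0(1) finFS by (simp add: sum.delta')
    also have "\<dots> = (\<Sum>F\<in>FS. u F * (if F = F0 then 1 else 0))"
      by (intro sum.cong) simp_all
    also have "\<dots> = (\<Sum>F\<in>FS. u F * (fact (d - 1) * (\<Sum>i\<in>{1..n}. M F i * a i)))"
      using eqF by (intro sum.cong) simp_all
    also have "\<dots> = fact (d - 1) * (\<Sum>F\<in>FS. \<Sum>i\<in>{1..n}. u F * M F i * a i)"
      by (simp add: sum_distrib_left ac_simps)
    also have "(\<Sum>F\<in>FS. \<Sum>i\<in>{1..n}. u F * M F i * a i) = (\<Sum>i\<in>{1..n}. (\<Sum>F\<in>FS. u F * M F i) * a i)"
      by (subst sum.swap) (simp add: sum_distrib_right)
    also have "\<dots> = 0" using u(2) by simp
    finally show False using F0(2) by simp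
  qed
qed


theorem theorem5p3:
  fixes n :: nat and \<Delta> :: "nat set set"
  assumes "simplicial_complex n \<Delta>"
    and "pure \<Delta>"
    and "card (facets \<Delta>) \<ge> n"
    and "\<exists>F\<in>facets \<Delta>. card F \<ge> 2"
    and "normally_torsion_free n (facet_ideal n \<Delta> :: 'k::field_char_0 mpoly set)"
  shows "\<not> strong_lefschetz n (A_ideal n \<Delta> :: 'k mpoly set)"
proof -
  obtain F where F: "F \<in> facets \<Delta>" "card F \<ge> 2" using assms(4) by blast
  define d where "d = card F"
  have pd: "\<forall>G\<in>facets \<Delta>. card G = d"
    using assms(2) F(1) unfolding pure_def d_def by blast
  have d2: "d \<ge> 2" using F(2) d_def by simp
  have ne: "facets \<Delta> \<noteq> {}" using F(1) by blast
  show ?thesis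
  proof (cases "\<exists>C. \<forall>G\<in>facets \<Delta>. card (G \<inter> C) = 1")
    case True
    then obtain C where C: "\<forall>G\<in>facets \<Delta>. card (G \<inter> C) = 1" by blast
    show ?thesis by (rule slp_fails[OF assms(1) pd d2 assms(3) ne C])
  next
    case False
    have "\<not> normally_torsion_free n (facet_ideal n \<Delta> :: 'k mpoly set)"
      by (rule not_ntf[OF assms(1) pd False]) (use d2 in simp)
    thus ?thesis using assms(5) by contradiction
  qed
qed

end
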